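(* Let $H$ be a monoid. Then: (a) $1s\Rightarrow 0s$, $3s\Rightarrow 0s$, $2s\Rightarrow 1s$, $2s\Rightarrow 3s$, $2s\Rightarrow 5s$, $3s\Rightarrow 6s$; (b) $1r\Rightarrow 0r$, $3r\Rightarrow 0r$, $2r\Rightarrow 1r$, $2r\Rightarrow 3r$, $2r\Rightarrow 5r$, $3r\Rightarrow 6r$, $5r\Rightarrow 4r$, $4r\Rightarrow 4'r$, $5r\Rightarrow 5'r$; (c) $kr\Rightarrow ks$ for each $k\in\{0,1,2,3,4,5,6\}$.
   Context: A monoid means a commutative cancellative monoid (written multiplicatively); $H^{\ast}$ is its unit group, $\mathbb{N}=\{1,2,\dots\}$, $\mathbb{N}_0=\{0,1,2,\dots\}$. $a\sim b$ means $a=ub$ with $u\in H^{\ast}$. Elements are relatively prime ($a\perp b$) if all their common divisors are units. $\mathrm{Sqf}\,H$: elements not of the form $b^2c$ with $b\notin H^{\ast}$. $\mathrm{Gpr}\,H$: elements $r$ such that $r\mid b^n$ ($n\in\mathbb{N}$) implies $r\mid b$. Let $S$ stand for $\mathrm{Sqf}\,H$ (conditions with suffix s) or $\mathrm{Gpr}\,H$ (suffix r). For every $a\in H$: (0) there are $n\in\mathbb{N}$, $s_1,\dots,s_n\in S$ with $a=s_1\cdots s_n$; (1) there are $n\in\mathbb{N}$, $s_1,\dots,s_n\in S$ with $s_i\perp s_j$ for $i\ne j$ and $a=s_1s_2^2s_3^3\cdots s_n^n$; (2) there are $n\in\mathbb{N}$, $s_1,\dots,s_n\in S$ with $s_i\mid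 s_{i+1}$ ($i=1,\dots,n-1$) and $a=s_1\cdots s_n$; (3) there are $n\in\mathbb{N}_0$, $s_0,\dots,s_n\in S$ with $a=s_0s_1^2s_2^{2^2}\cdots s_n^{2^n}$; (4) there are $b\in H$, $c\in S$ with $b\perp c$, $a=bc$, and some $d\in S$ with $d^2\mid b$ and $b\mid d^n$ for some $n\in\mathbb{N}$; (4') there are $b\in H$, $c\in S$ with $b\perp c$, $a=bc$, and for every $d\in S$, $d\mid b$ implies $d^2\mid b$; (5) there are $b\in H$, $c\in S$ with $a=bc$ and $a\mid c^n$ for some $n\in\mathbb{N}$; (5') there are $b\in H$, $c\in S$ with $a=bc$ and for every $d\in S$, $d\mid a$ implies $d\mid c$; (6) there are $b\in H$, $c\in S$ with $a=b^2c$. Condition $ks$ (resp. $kr$) is condition $(k)$ with $S=\mathrm{Sqf}\,H$ (resp. $S=\mathrm{Gpr}\,H$). *)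

theory Defs
  imports Main
begin

text \<open>The monoid H is the type 'a of class comm_monoid_mult; cancellativity is an
explicit hypothesis of the theorem. Divisibility is the library's dvd.\<close>

definition munit :: "'a::comm_monoid_mult \<Rightarrow> bool" where
  "munit u \<longleftrightarrow> u dvd 1"

definition relprime :: "'a::comm_monoid_mult \<Rightarrow> 'a \<Rightarrow> bool" where
  "relprime a b \<longleftrightarrow> (\<forall>d. d dvd a \<longrightarrow> d dvd b \<longrightarrow> munit d)"

definition Sqf :: "'a::comm_monoid_mult set" where
  "Sqf = {a. \<not> (\<exists>b c. \<not> munit b \<and> a = b^2 * c)}"

definition Gpr :: "'a::comm_monoid_mult set" where
  "Gpr = {r. \<forall>b (n::nat). n \<ge> 1 \<longrightarrow> r dvd b^n \<longrightarrow> r dvd b}"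

definition C0 :: "'a::comm_monoid_mult set \<Rightarrow> bool" where
  "C0 S \<longleftrightarrow> (\<forall>a. \<exists>(n::nat) s. n \<ge> 1 \<and> (\<forall>i\<in>{1..n}. s i \<in> S) \<and>
      a = (\<Prod>i=1..n. s i))"

definition C1 :: "'a::comm_monoid_mult set \<Rightarrow> bool" where
  "C1 S \<longleftrightarrow> (\<forall>a. \<exists>(n::nat) s. n \<ge> 1 \<and> (\<forall>i\<in>{1..n}. s i \<in> S) \<and>
      (\<forall>i\<in>{1..n}. \<forall>j\<in>{1..n}. i \<noteq> j \<longrightarrow> relprime (s i) (s j)) \<and>
      a = (\<Prod>i=1..n. s i ^ i))"

definition C2 :: "'a::comm_monoid_mult set \<Rightarrow> bool" where
  "C2 S \<longleftrightarrow> (\<forall>a. \<exists>(n::nat) s. n \<ge> 1 \<and> (\<forall>i\<in>{1..n}. s i \<in> S) \<and>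
      (\<forall>i\<in>{1..<n}. s i dvd s (Suc i)) \<and>
      a = (\<Prod>i=1..n. s i))"

definition C3 :: "'a::comm_monoid_mult set \<Rightarrow> bool" where
  "C3 S \<longleftrightarrow> (\<forall>a. \<exists>(n::nat) s. (\<forall>i\<in>{0..n}. s i \<in> S) \<and>
      a = (\<Prod>i=0..n. s i ^ (2^i)))"

definition C4 :: "'a::comm_monoid_mult set \<Rightarrow> bool" where
  "C4 S \<longleftrightarrow> (\<forall>a. \<exists>b c. c \<in> S \<and> relprime b c \<and> a = b * c \<and>
      (\<exists>d\<in>S. d^2 dvd b \<and> (\<exists>n::nat. n \<ge> 1 \<and> b dvd d^n)))"

definition C4' :: "'a::comm_monoid_mult set \<Rightarrow> bool" where
  "C4' S \<longleftrightarrow> (\<forall>a. \<exists>b c. c \<in> S \<and> relprime b c \<and> a = b * c \<and>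
      (\<forall>d\<in>S. d dvd b \<longrightarrow> d^2 dvd b))"

definition C5 :: "'a::comm_monoid_mult set \<Rightarrow> bool" where
  "C5 S \<longleftrightarrow> (\<forall>a. \<exists>b c. c \<in> S \<and> a = b * c \<and> (\<exists>n::nat. n \<ge> 1 \<and> a dvd c^n))"

definition C5' :: "'a::comm_monoid_mult set \<Rightarrow> bool" where
  "C5' S \<longleftrightarrow> (\<forall>a. \<exists>b c. c \<in> S \<and> a = b * c \<and> (\<forall>d\<in>S. d dvd a \<longrightarrow> d dvd c))"

definition C6 :: "'a::comm_monoid_mult set \<Rightarrow> bool" where
  "C6 S \<longleftrightarrow> (\<forall>a. \<exists>b c. c \<in> S \<and> a = b^2 * c)"

end

theory Submission
  imports Defs
begin


lemma sqf_unit: "(x::'a::comm_monoid_mult) \<in> Sqf \<Longrightarrow> e^2 dvd x \<Longrightarrow> munit e"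
  unfolding Sqf_def dvd_def by auto

lemma one_Sqf: "(1::'a::comm_monoid_mult) \<in> Sqf"
  unfolding Sqf_def munit_def
proof clarify
  fix b c :: 'a assume "\<not> b dvd 1" "1 = b^2 * c"
  moreover have "b dvd b^2 * c" by (simp add: power2_eq_square mult.assoc)
  ultimately show False by simp
qed

lemma one_Gpr: "(1::'a::comm_monoid_mult) \<in> Gpr"
  unfolding Gpr_def by auto

lemma Sqf_div: "(x::'a::comm_monoid_mult) * y \<in> Sqf \<Longrightarrow> y \<in> Sqf"
proof -
  assume h: "x * y \<in> Sqf"
  show "y \<in> Sqf" unfolding Sqf_def
  proof clarify
    fix b c assume "\<not> munit b" "y = b^2 * c"
    then have "x * y = b^2 * (c * x)" by (simp add: ac_simps)
    then show False using h \<open>\<not> munit b\<close> unfolding Sqf_def by blast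
  qed
qed

context
  assumes cancel: "\<forall>a b c :: 'a::comm_monoid_mult. a * c = b * c \<longrightarrow> a = b"
begin

lemma Gpr_Sqf: "(x::'a) \<in> Gpr \<Longrightarrow> x \<in> Sqf"
proof -
  assume x: "x \<in> Gpr"
  show "x \<in> Sqf"
  proof (unfold Sqf_def, clarify)
    fix b c assume nu: "\<not> munit b" and xe: "x = b^2 * c"
    have "(b*c)^2 = x * c" using xe by (simp add: power_mult_distrib ac_simps power2_eq_square)
    then have "x dvd (b*c)^2" by simp
    moreover have "(2::nat) \<ge> 1" by simp
    ultimately have "x dvd b*c" using x unfolding Gpr_def by blast
    then obtain k where "b*c = x * k" by (auto simp: dvd_def)
    moreover have "x*k = (b*k)*(b*c)" using xe by (simp add: power2_eq_square ac_simps)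
    ultimately have "1 * (b*c) = (b*k) * (b*c)" by simp
    then have "1 = b * k" by (rule cancel[rule_format])
    then show False using nu unfolding munit_def by (metis dvd_triv_left)
  qed
qed

lemma Gpr_div: "(x::'a) * y \<in> Gpr \<Longrightarrow> y \<in> Gpr"
proof -
  assume g: "x * y \<in> Gpr"
  show "y \<in> Gpr" unfolding Gpr_def
  proof clarify
    fix b :: 'a and n :: nat assume n: "n \<ge> 1" and d: "y dvd b^n"
    have "x*y dvd x * b^n" using d by (simp add: mult_dvd_mono)
    also have "x * b^n dvd (x*b)^n" using n
      unfolding power_mult_distrib by (intro mult_dvd_mono) (cases n, auto)
    finally have "x*y dvd x*b" using g n unfolding Gpr_def by blast
    then obtain k where "x*b = x*y*k" by (auto simp: dvd_def)
    then have "b * x = (y*k) * x" by (simp add: ac_simps)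
    then have "b = y*k" by (rule cancel[rule_format])
    then show "y dvd b" by simp
  qed
qed

end


locale goodS =
  fixes S :: "'a::comm_monoid_mult set"
  assumes one: "1 \<in> S" and sub: "\<And>x. x \<in> S \<Longrightarrow> x \<in> Sqf"
    and dv: "\<And>x y. x * y \<in> S \<Longrightarrow> y \<in> S"
begin

lemma dvdS: "x \<in> S \<Longrightarrow> y dvd x \<Longrightarrow> y \<in> S"
  using dv by (auto simp: dvd_def ac_simps)

definition P0 :: "'a \<Rightarrow> bool" where
  "P0 a \<longleftrightarrow> (\<exists>(n::nat) s. n \<ge> 1 \<and> (\<forall>i\<in>{1..n}. s i \<in> S) \<and> a = (\<Prod>i=1..n. s i))"

lemma P0_snoc: assumes "P0 a" "x \<in> S" shows "P0 (a*x)"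
proof -
  obtain n :: nat and s where h: "n \<ge> 1" "\<forall>i\<in>{1..n}. s i \<in> S" "a = (\<Prod>i=1..n. s i)"
    using assms(1) unfolding P0_def by blast
  define s' where "s' = s(Suc n := x)"
  have "(\<Prod>i=1..Suc n. s' i) = (\<Prod>i=1..n. s' i) * s' (Suc n)" by (simp add: prod.cl_ivl_Suc)
  also have "(\<Prod>i=1..n. s' i) = (\<Prod>i=1..n. s i)" unfolding s'_def by (intro prod.cong) auto
  finally have "a * x = (\<Prod>i=1..Suc n. s' i)" using h by (simp add: s'_def)
  moreover have "\<forall>i\<in>{1..Suc n}. s' i \<in> S" using h assms(2) by (auto simp: s'_def)
  ultimately show ?thesis unfolding P0_def by (intro exI[of _ "Suc n"] exI[of _ s']) auto
qed

lemma P0_one: "P0 1"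
  unfolding P0_def by (intro exI[of _ 1] exI[of _ "\<lambda>_. 1"]) (auto simp: one)

lemma P0_S: "x \<in> S \<Longrightarrow> P0 x"
  using P0_snoc[OF P0_one] by simp

lemma P0_mult: assumes "P0 a" "P0 b" shows "P0 (a*b)"
proof -
  obtain n :: nat and s where h: "\<forall>i\<in>{1..n}. s i \<in> S" "b = (\<Prod>i=1..n. s i)"
    using assms(2) unfolding P0_def by blast
  have "\<forall>a. P0 a \<longrightarrow> P0 (a * (\<Prod>i=1..m. s i))" if "m \<le> n" for m
    using that
  proof (induction m)
    case 0 then show ?case by simp
  next
    case (Suc m)
    show ?case
    proof clarify
      fix a assume "P0 a"
      then have "P0 (a * (\<Prod>i=1..m. s i))" using Suc by auto
      moreover have "s (Suc m) \<in> S" using Suc h(1) by auto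
      ultimately have "P0 (a * (\<Prod>i=1..m. s i) * s (Suc m))" by (rule P0_snoc)
      then show "P0 (a * (\<Prod>i=1..Suc m. s i))" by (simp add: prod.cl_ivl_Suc ac_simps)
    qed
  qed
  then show ?thesis using assms(1) h(2) by blast
qed

lemma P0_prod: "finite A \<Longrightarrow> (\<forall>i\<in>A. P0 (f i)) \<Longrightarrow> P0 (prod f A)"
  by (induction A rule: finite_induct) (auto simp: P0_one P0_mult)

lemma P0_pow: "P0 x \<Longrightarrow> P0 (x^k)"
  by (induction k) (auto simp: P0_one P0_mult)

lemma C1_C0: "C1 S \<Longrightarrow> C0 S"
  unfolding C1_def C0_def
proof clarify
  fix a assume h: "\<forall>a. \<exists>n s. 1 \<le> n \<and> (\<forall>i\<in>{1..n}. s i \<in> S) \<and>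
                 (\<forall>i\<in>{1..n}. \<forall>j\<in>{1..n}. i \<noteq> j \<longrightarrow> relprime (s i) (s j)) \<and> a = (\<Prod>i = 1..n. s i ^ i)"
  then obtain n :: nat and s where "\<forall>i\<in>{1..n}. s i \<in> S" "a = (\<Prod>i = 1..n. s i ^ i)" by blast
  then have "P0 a" by (simp, intro P0_prod) (use P0_pow P0_S in auto)
  then show "\<exists>(n::nat) s. 1 \<le> n \<and> (\<forall>i\<in>{1..n}. s i \<in> S) \<and> a = prod s {1..n}" unfolding P0_def .
qed

lemma C3_C0: "C3 S \<Longrightarrow> C0 S"
  unfolding C3_def C0_def
proof clarify
  fix a assume h: "\<forall>a. \<exists>n s. (\<forall>i\<in>{0..n}. s i \<in> S) \<and> a = (\<Prod>i = 0..n. s i ^ 2 ^ i)"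
  then obtain n :: nat and s where "\<forall>i\<in>{0..n}. s i \<in> S" "a = (\<Prod>i = 0..n. s i ^ 2 ^ i)" by blast
  then have "P0 a" by (simp, intro P0_prod) (use P0_pow P0_S in auto)
  then show "\<exists>(n::nat) s. 1 \<le> n \<and> (\<forall>i\<in>{1..n}. s i \<in> S) \<and> a = prod s {1..n}" unfolding P0_def .
qed

lemma chain_dvd: fixes s :: "nat \<Rightarrow> 'a" shows "(\<forall>i\<in>{1..<n}. s i dvd s (Suc i)) \<Longrightarrow> 1 \<le> i \<Longrightarrow> i \<le> j \<Longrightarrow> j \<le> n \<Longrightarrow> s i dvd s j"
proof (induction j)
  case 0 then show ?case by simp
next
  case (Suc j)
  show ?case
  proof (cases "i = Suc j")
    case False
    then have "s i dvd s j" using Suc by auto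
    moreover have "s j dvd s (Suc j)" using Suc False by auto
    ultimately show ?thesis by (rule dvd_trans[OF _ _])
  qed simp
qed

lemma C2_C5: "C2 S \<Longrightarrow> C5 S"
  unfolding C2_def C5_def
proof clarify
  fix a assume "\<forall>a. \<exists>n s. 1 \<le> n \<and> (\<forall>i\<in>{1..n}. s i \<in> S) \<and> (\<forall>i\<in>{1..<n}. s i dvd s (Suc i)) \<and> a = prod s {1..n}"
  then obtain n :: nat and s where h: "1 \<le> n" "\<forall>i\<in>{1..n}. s i \<in> S" "\<forall>i\<in>{1..<n}. s i dvd s (Suc i)" "a = prod s {1..n}"
    by blast
  obtain k where k: "n = Suc k" using h(1) by (cases n) auto
  have e: "a = prod s {1..k} * s n" using h(4) k by (simp add: prod.cl_ivl_Suc)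
  have "prod s {1..n} dvd (\<Prod>i=1..n. s n)" by (rule prod_dvd_prod) (auto intro: chain_dvd[OF h(3)])
  then have "a dvd s n ^ n" using h(4) by simp
  then show "\<exists>b c. c \<in> S \<and> a = b * c \<and> (\<exists>n. 1 \<le> n \<and> a dvd c ^ n)"
  proof (intro exI conjI)
    show "s n \<in> S" using h(1,2) by auto
  qed (use e h(1) \<open>a dvd s n ^ n\<close> in auto)
qed

end


context goodS begin

lemma relprime_sym: "relprime x y \<Longrightarrow> relprime y x"
  unfolding relprime_def by blast

lemma chain_C1:
  fixes s :: "nat \<Rightarrow> 'a"
  shows "n \<ge> 1 \<Longrightarrow> (\<forall>i\<in>{1..n}. s i \<in> S) \<Longrightarrow> (\<forall>i\<in>{1..<n}. s i dvd s (Suc i)) \<Longrightarrow>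
    \<exists>t. (\<forall>i\<in>{1..n}. t i \<in> S) \<and> (\<forall>i\<in>{1..n}. \<forall>j\<in>{1..n}. i \<noteq> j \<longrightarrow> relprime (t i) (t j)) \<and>
        (\<Prod>i=1..n. t i ^ i) = (\<Prod>i=1..n. s i) \<and> (\<Prod>i=1..n. t i) = s n"
proof (induction n)
  case 0 then show ?case by simp
next
  case (Suc n)
  show ?case
  proof (cases "n = 0")
    case True
    then show ?thesis using Suc.prems by (intro exI[of _ s]) auto
  next
    case False
    obtain t where t: "\<forall>i\<in>{1..n}. t i \<in> S" "\<forall>i\<in>{1..n}. \<forall>j\<in>{1..n}. i \<noteq> j \<longrightarrow> relprime (t i) (t j)"
        "(\<Prod>i=1..n. t i ^ i) = (\<Prod>i=1..n. s i)" "(\<Prod>i=1..n. t i) = s n"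
      using Suc.IH Suc.prems False by auto
    have "s n dvd s (Suc n)" using Suc.prems False by auto
    then obtain u where u: "s (Suc n) = s n * u" by (auto simp: dvd_def)
    have sS: "s (Suc n) \<in> S" using Suc.prems by auto
    have uS: "u \<in> S" using dvdS[OF sS] u by simp
    define t' where "t' = (\<lambda>i. if i = 1 then u else t (i - 1))"
    have rp: "relprime u (t k)" if k: "k \<in> {1..n}" for k
      unfolding relprime_def
    proof clarify
      fix e assume e1: "e dvd u" and e2: "e dvd t k"
      have "(\<Prod>i=1..n. t i) = t k * (\<Prod>i\<in>{1..n}-{k}. t i)" using k by (simp add: prod.remove)
      then have "t k dvd s n" using t(4) by (metis dvd_triv_left)
      then have "e * e dvd u * s n" using e1 e2 by (meson dvd_trans mult_dvd_mono)
      then have "e^2 dvd s (Suc n)" using u by (simp add: power2_eq_square ac_simps)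
      then show "munit e" using sub[OF sS] sqf_unit by blast
    qed
    have sh: "(\<Prod>i=1..Suc n. f i) = f 1 * (\<Prod>i=1..n. f (Suc i))" for f :: "nat \<Rightarrow> 'a"
      by (simp add: prod.atLeast_Suc_atMost prod.shift_bounds_cl_Suc_ivl[symmetric] mult.assoc)
    have e1: "(\<Prod>i=1..Suc n. t' i ^ i) = u * (\<Prod>i=1..n. t i ^ Suc i)"
      unfolding sh by (simp add: t'_def)
    also have "\<dots> = u * (\<Prod>i=1..n. t i) * (\<Prod>i=1..n. t i ^ i)"
      by (simp add: prod.distrib ac_simps)
    also have "\<dots> = (\<Prod>i=1..Suc n. s i)" using t u by (simp add: ac_simps)
    finally have E1: "(\<Prod>i=1..Suc n. t' i ^ i) = (\<Prod>i=1..Suc n. s i)" .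
    have E2: "(\<Prod>i=1..Suc n. t' i) = s (Suc n)"
      unfolding sh using t u by (simp add: t'_def ac_simps)
    have M: "\<forall>i\<in>{1..Suc n}. t' i \<in> S"
    proof
      fix i assume i: "i \<in> {1..Suc n}"
      show "t' i \<in> S"
      proof (cases "i = 1")
        case False
        then have "i - 1 \<in> {1..n}" using i by auto
        then show ?thesis using t(1) False by (auto simp: t'_def)
      qed (use uS in \<open>auto simp: t'_def\<close>)
    qed
    have R: "\<forall>i\<in>{1..Suc n}. \<forall>j\<in>{1..Suc n}. i \<noteq> j \<longrightarrow> relprime (t' i) (t' j)"
    proof (intro ballI impI)
      fix i j assume i: "i \<in> {1..Suc n}" and j: "j \<in> {1..Suc n}" and ij: "i \<noteq> j"
      have i1: "i \<noteq> 1 \<Longrightarrow> i - 1 \<in> {1..n}" using i by auto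
      have j1: "j \<noteq> 1 \<Longrightarrow> j - 1 \<in> {1..n}" using j by auto
      show "relprime (t' i) (t' j)"
      proof (cases "i = 1")
        case True
        then show ?thesis using ij j1 rp[of "j - 1"] by (auto simp: t'_def)
      next
        case F: False
        show ?thesis
        proof (cases "j = 1")
          case True
          then show ?thesis using F i1 rp[of "i - 1"] relprime_sym by (auto simp: t'_def)
        next
          case False
          then show ?thesis using F i1 j1 ij t(2)[rule_format, of "i - 1" "j - 1"] by (auto simp: t'_def)
        qed
      qed
    qed
    show ?thesis using E1 E2 M R by blast
  qed
qed

lemma C2_C1: "C2 S \<Longrightarrow> C1 S"
  unfolding C2_def C1_def
proof clarify
  fix a assume "\<forall>a. \<exists>(n::nat) s. n \<ge> 1 \<and> (\<forall>i\<in>{1..n}. s i \<in> S) \<and>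
      (\<forall>i\<in>{1..<n}. s i dvd s (Suc i)) \<and> a = (\<Prod>i=1..n. s i)"
  then obtain n :: nat and s where h: "n \<ge> 1" "\<forall>i\<in>{1..n}. s i \<in> S"
      "\<forall>i\<in>{1..<n}. s i dvd s (Suc i)" "a = (\<Prod>i=1..n. s i)" by blast
  from chain_C1[OF h(1-3)] obtain t where
     "(\<forall>i\<in>{1..n}. t i \<in> S)" "(\<forall>i\<in>{1..n}. \<forall>j\<in>{1..n}. i \<noteq> j \<longrightarrow> relprime (t i) (t j))"
        "(\<Prod>i=1..n. t i ^ i) = (\<Prod>i=1..n. s i)" by blast
  then show "\<exists>(n::nat) s. 1 \<le> n \<and> (\<forall>i\<in>{1..n}. s i \<in> S) \<and>
      (\<forall>i\<in>{1..n}. \<forall>j\<in>{1..n}. i \<noteq> j \<longrightarrow> relprime (s i) (s j)) \<and> a = (\<Prod>i=1..n. s i ^ i)"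
    using h(1,4) by (intro exI[of _ n] exI[of _ t]) auto
qed

end


context goodS begin

definition R3 :: "'a \<Rightarrow> bool" where
  "R3 a \<longleftrightarrow> (\<exists>(n::nat) r. (\<forall>i\<in>{0..n}. r i \<in> S) \<and> a = (\<Prod>i=0..n. r i ^ (2^i)))"

lemma prod_pow: "prod f A ^ n = prod (\<lambda>x. (f x :: 'a) ^ n) A"
  by (induction A rule: infinite_finite_induct) (auto simp: power_mult_distrib)

lemma pow2h: "((x::'a)^(2^i))^2 = x^(2*2^i)"
  by (simp add: power_mult[symmetric] mult.commute)

lemma R3_base: "c \<in> S \<Longrightarrow> R3 c"
  unfolding R3_def by (intro exI[of _ 0] exI[of _ "\<lambda>_. c"]) auto

lemma R3_step: assumes c: "c \<in> S" and b: "R3 b" shows "R3 (c * b^2)"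
proof -
  obtain n :: nat and r where r: "\<forall>i\<in>{0..n}. r i \<in> S" "b = (\<Prod>i=0..n. r i ^ (2^i))"
    using b unfolding R3_def by blast
  define r' where "r' = (\<lambda>i. if i = 0 then c else r (i - 1))"
  have "(\<Prod>i=0..Suc n. r' i ^ (2^i)) = c * (\<Prod>i=0..n. r i ^ (2^Suc i))"
    unfolding prod.atLeast0_atMost_Suc_shift by (simp add: r'_def comp_def)
  also have "\<dots> = c * b^2" unfolding r(2) prod_pow pow2h by simp
  finally have E: "c * b^2 = (\<Prod>i=0..Suc n. r' i ^ (2^i))" by simp
  have M: "\<forall>i\<in>{0..Suc n}. r' i \<in> S"
  proof
    fix i assume i: "i \<in> {0..Suc n}"
    show "r' i \<in> S"
    proof (cases "i = 0")
      case False
      then have "i - 1 \<in> {0..n}" using i by auto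
      then show ?thesis using r(1) False by (auto simp: r'_def)
    qed (use c in \<open>auto simp: r'_def\<close>)
  qed
  show ?thesis unfolding R3_def using E M by blast
qed

lemma R3_dec: assumes "R3 a" shows "\<exists>b c. c \<in> S \<and> a = b^2 * c"
proof -
  obtain n :: nat and r where r: "\<forall>i\<in>{0..n}. r i \<in> S" "a = (\<Prod>i=0..n. r i ^ (2^i))"
    using assms unfolding R3_def by blast
  show ?thesis
  proof (cases n)
    case 0
    then show ?thesis using r by (intro exI[of _ 1] exI[of _ "r 0"]) auto
  next
    case (Suc m)
    have "a = r 0 * (\<Prod>i=0..m. r (Suc i) ^ (2^Suc i))"
      using r(2) unfolding Suc prod.atLeast0_atMost_Suc_shift by (simp add: comp_def)
    also have "\<dots> = (\<Prod>i=0..m. r (Suc i) ^ (2^i))^2 * r 0" unfolding prod_pow pow2h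
      by (simp add: mult.commute)
    finally show ?thesis using r(1) by (intro exI[of _ "\<Prod>i=0..m. r (Suc i) ^ (2^i)"] exI[of _ "r 0"]) auto
  qed
qed

lemma pair_lemma:
  fixes t :: "nat \<Rightarrow> 'a"
  shows "(\<forall>i<2*m. t i dvd t (Suc i)) \<Longrightarrow>
    \<exists>c. c * t 0 dvd t (2*m) \<and> (\<Prod>i=1..2*m. t i) = c * (\<Prod>j=1..m. t (2*j-1))^2"
proof (induction m)
  case 0 then show ?case by (intro exI[of _ 1]) auto
next
  case (Suc m)
  then obtain c where c: "c * t 0 dvd t (2*m)" "(\<Prod>i=1..2*m. t i) = c * (\<Prod>j=1..m. t (2*j-1))^2"
    by auto
  have "t (Suc (2*m)) dvd t (Suc (Suc (2*m)))" using Suc.prems by auto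
  then obtain u where u: "t (Suc (Suc (2*m))) = t (Suc (2*m)) * u" by (auto simp: dvd_def)
  have "t (2*m) dvd t (Suc (2*m))" using Suc.prems by auto
  then have "c * t 0 dvd t (Suc (2*m))" using c(1) by (rule dvd_trans[rotated])
  then have "(c * t 0) * u dvd t (Suc (2*m)) * u" by (rule mult_dvd_mono) simp
  then have D: "(c * u) * t 0 dvd t (2 * Suc m)" using u by (simp add: ac_simps)
  have "(\<Prod>i=1..2*Suc m. t i) = (\<Prod>i=1..2*m. t i) * t (Suc (2*m)) * t (Suc (Suc (2*m)))"
    by (simp add: prod.cl_ivl_Suc)
  also have "\<dots> = (c*u) * ((\<Prod>j=1..m. t (2*j-1)) * t (Suc (2*m)))^2"
    unfolding c(2) u by (simp add: power2_eq_square ac_simps)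
  also have "(\<Prod>j=1..m. t (2*j-1)) * t (Suc (2*m)) = (\<Prod>j=1..Suc m. t (2*j-1))"
    by (simp add: prod.cl_ivl_Suc)
  finally show ?case using D by blast
qed

end


context goodS begin

lemma chain_R3:
  fixes s :: "nat \<Rightarrow> 'a"
  shows "(\<forall>i\<in>{1..n}. s i \<in> S) \<Longrightarrow> (\<forall>i\<in>{1..<n}. s i dvd s (Suc i)) \<Longrightarrow> R3 (\<Prod>i=1..n. s i)"
proof (induction n arbitrary: s rule: less_induct)
  case (less n)
  note mem = less.prems(1) and ch = less.prems(2)
  have cd: "s i dvd s j" if "1 \<le> i" "i \<le> j" "j \<le> n" for i j
    using chain_dvd[OF ch that] .
  obtain m0 where m0: "n = 2*m0 \<or> n = 2*m0+1" by (metis oddE evenE)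
  consider "n = 0" | m where "n = 2*m" "m \<ge> 1" | m where "n = 2*m+1"
  proof -
    assume a1: "n = 0 \<Longrightarrow> thesis" and a2: "\<And>m. n = 2*m \<Longrightarrow> m \<ge> 1 \<Longrightarrow> thesis"
      and a3: "\<And>m. n = 2*m+1 \<Longrightarrow> thesis"
    show thesis
    proof (cases "n = 2*m0")
      case True
      then show ?thesis using a1 a2[of m0] by (cases "m0 = 0") auto
    qed (use m0 a3 in auto)
  qed
  then show ?case
  proof cases
    case 1 then show ?thesis using R3_base one by simp
  next
    case 2
    define t where "t = s(0 := 1)"
    have tch: "\<forall>i<2*m. t i dvd t (Suc i)"
    proof (intro allI impI)
      fix i assume i: "i < 2*m"
      show "t i dvd t (Suc i)"
      proof (cases "i = 0")
        case False then show ?thesis using i 2 ch by (auto simp: t_def)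
      qed (simp add: t_def)
    qed
    obtain c where c: "c * t 0 dvd t (2*m)" "(\<Prod>i=1..2*m. t i) = c * (\<Prod>j=1..m. t (2*j-1))^2"
      using pair_lemma[OF tch] by blast
    have cS: "c \<in> S"
    proof -
      have "c dvd s n" using c(1) 2 by (simp add: t_def)
      moreover have "s n \<in> S" using mem 2 by auto
      ultimately show ?thesis using dvdS by blast
    qed
    have p1: "(\<Prod>i=1..2*m. t i) = (\<Prod>i=1..n. s i)" unfolding 2 by (intro prod.cong) (auto simp: t_def)
    have p2: "(\<Prod>j=1..m. t (2*j-1)) = (\<Prod>j=1..m. s (2*j-1))" by (intro prod.cong) (auto simp: t_def)
    have "R3 (\<Prod>j=1..m. s (2*j-1))"
    proof (rule less.IH)
      show "m < n" using 2 by simp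
      show "\<forall>i\<in>{1..m}. s (2*i-1) \<in> S"
      proof
        fix i assume "i \<in> {1..m}"
        then have "2*i-1 \<in> {1..n}" using 2 by auto
        then show "s (2*i-1) \<in> S" using mem by blast
      qed
      show "\<forall>i\<in>{1..<m}. s (2*i-1) dvd s (2*Suc i - 1)" using cd 2 by auto
    qed
    then have "R3 (c * (\<Prod>j=1..m. s (2*j-1))^2)" using cS by (intro R3_step)
    then show ?thesis using c(2) p1 p2 by simp
  next
    case 3
    define t where "t = (\<lambda>i. s (Suc i))"
    have tch: "\<forall>i<2*m. t i dvd t (Suc i)" using ch 3 by (auto simp: t_def)
    obtain c where c: "c * t 0 dvd t (2*m)" "(\<Prod>i=1..2*m. t i) = c * (\<Prod>j=1..m. t (2*j-1))^2"
      using pair_lemma[OF tch] by blast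
    have cS: "s 1 * c \<in> S"
    proof -
      have "s 1 * c dvd s n" using c(1) 3 by (simp add: t_def mult.commute)
      moreover have "s n \<in> S" using mem 3 by auto
      ultimately show ?thesis using dvdS by blast
    qed
    have p1: "(\<Prod>i=1..n. s i) = s 1 * (\<Prod>i=1..2*m. t i)" unfolding 3 t_def
      by (simp add: prod.atLeast_Suc_atMost prod.shift_bounds_cl_Suc_ivl[symmetric] del: prod.cl_ivl_Suc)
    have "R3 (\<Prod>j=1..m. t (2*j-1))"
    proof (rule less.IH)
      show "m < n" using 3 by simp
      show "\<forall>i\<in>{1..m}. t (2*i-1) \<in> S" using mem 3 by (auto simp: t_def)
      show "\<forall>i\<in>{1..<m}. t (2*i-1) dvd t (2*Suc i - 1)" using cd 3 by (auto simp: t_def)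
    qed
    then have "R3 ((s 1 * c) * (\<Prod>j=1..m. t (2*j-1))^2)" using cS by (intro R3_step)
    then show ?thesis using c(2) p1 by (simp add: ac_simps)
  qed
qed

lemma C2_C3: "C2 S \<Longrightarrow> C3 S"
  unfolding C2_def C3_def
proof clarify
  fix a assume "\<forall>a. \<exists>(n::nat) s. n \<ge> 1 \<and> (\<forall>i\<in>{1..n}. s i \<in> S) \<and>
      (\<forall>i\<in>{1..<n}. s i dvd s (Suc i)) \<and> a = (\<Prod>i=1..n. s i)"
  then obtain n :: nat and s where h: "\<forall>i\<in>{1..n}. s i \<in> S"
      "\<forall>i\<in>{1..<n}. s i dvd s (Suc i)" "a = (\<Prod>i=1..n. s i)" by blast
  then have "R3 a" using chain_R3 by simp
  then show "\<exists>(n::nat) s. (\<forall>i\<in>{0..n}. s i \<in> S) \<and> a = (\<Prod>i = 0..n. s i ^ 2 ^ i)"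
    unfolding R3_def .
qed

lemma C3_C6: "C3 S \<Longrightarrow> C6 S"
  unfolding C3_def C6_def using R3_dec unfolding R3_def by blast

end


lemma goodS_Sqf: "goodS (Sqf :: 'a::comm_monoid_mult set)"
  by unfold_locales (auto simp: one_Sqf intro: Sqf_div)

lemma goodS_Gpr:
  assumes cancel: "\<forall>a b c :: 'a::comm_monoid_mult. a * c = b * c \<longrightarrow> a = b"
  shows "goodS (Gpr :: 'a set)"
  by unfold_locales (auto simp: one_Gpr intro: Gpr_div[OF cancel] Gpr_Sqf[OF cancel])

lemma m0: assumes "A \<subseteq> B" "C0 A" shows "C0 B" unfolding C0_def
proof
  fix a obtain n s where "n \<ge> (1::nat)" "\<forall>i\<in>{1..n}. s i \<in> A" "a = (\<Prod>i=1..n. s i)" using spec[OF assms(2)[unfolded C0_def], of a] by (elim exE conjE) blast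
  then show "\<exists>(n::nat) s. n \<ge> 1 \<and> (\<forall>i\<in>{1..n}. s i \<in> B) \<and> a = (\<Prod>i=1..n. s i)" using assms(1) by blast
qed
lemma m1: assumes "A \<subseteq> B" "C1 A" shows "C1 B" unfolding C1_def
proof
  fix a obtain n s where "n \<ge> (1::nat)" "\<forall>i\<in>{1..n}. s i \<in> A" "(\<forall>i\<in>{1..n}. \<forall>j\<in>{1..n}. i \<noteq> j \<longrightarrow> relprime (s i) (s j))" "a = (\<Prod>i=1..n. s i ^ i)" using spec[OF assms(2)[unfolded C1_def], of a] by (elim exE conjE) blast
  then show "\<exists>(n::nat) s. n \<ge> 1 \<and> (\<forall>i\<in>{1..n}. s i \<in> B) \<and> (\<forall>i\<in>{1..n}. \<forall>j\<in>{1..n}. i \<noteq> j \<longrightarrow> relprime (s i) (s j)) \<and> a = (\<Prod>i=1..n. s i ^ i)" using assms(1) by blast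
qed
lemma m2: assumes "A \<subseteq> B" "C2 A" shows "C2 B" unfolding C2_def
proof
  fix a obtain n s where "n \<ge> (1::nat)" "\<forall>i\<in>{1..n}. s i \<in> A" "(\<forall>i\<in>{1..<n}. s i dvd s (Suc i))" "a = (\<Prod>i=1..n. s i)" using spec[OF assms(2)[unfolded C2_def], of a] by (elim exE conjE) blast
  then show "\<exists>(n::nat) s. n \<ge> 1 \<and> (\<forall>i\<in>{1..n}. s i \<in> B) \<and> (\<forall>i\<in>{1..<n}. s i dvd s (Suc i)) \<and> a = (\<Prod>i=1..n. s i)" using assms(1) by blast
qed
lemma m3: assumes "A \<subseteq> B" "C3 A" shows "C3 B" unfolding C3_def
proof
  fix a obtain n s where "\<forall>i\<in>{0..n::nat}. s i \<in> A" "a = (\<Prod>i=0..n. s i ^ (2^i))" using spec[OF assms(2)[unfolded C3_def], of a] by (elim exE conjE) blast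
  then show "\<exists>(n::nat) s. (\<forall>i\<in>{0..n}. s i \<in> B) \<and> a = (\<Prod>i=0..n. s i ^ (2^i))" using assms(1) by blast
qed
lemma m4: assumes "A \<subseteq> B" "C4 A" shows "C4 B" unfolding C4_def
proof
  fix a obtain b c d and n :: nat where "c \<in> A" "relprime b c" "a = b * c" "d \<in> A" "d^2 dvd b" "n \<ge> 1" "b dvd d^n"
    using spec[OF assms(2)[unfolded C4_def], of a] by (elim exE conjE) blast
  then show "\<exists>b c. c \<in> B \<and> relprime b c \<and> a = b * c \<and> (\<exists>d\<in>B. d^2 dvd b \<and> (\<exists>n::nat. n \<ge> 1 \<and> b dvd d^n))"
    using assms(1) by blast
qed
lemma m5: assumes "A \<subseteq> B" "C5 A" shows "C5 B" unfolding C5_def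
proof
  fix a obtain b c and n :: nat where "c \<in> A" "a = b * c" "n \<ge> 1" "a dvd c^n"
    using spec[OF assms(2)[unfolded C5_def], of a] by (elim exE conjE) blast
  then show "\<exists>b c. c \<in> B \<and> a = b * c \<and> (\<exists>n::nat. n \<ge> 1 \<and> a dvd c^n)"
    using assms(1) by blast
qed
lemma m6: assumes "A \<subseteq> B" "C6 A" shows "C6 B" unfolding C6_def
proof
  fix a obtain b c where "c \<in> A" "a = b^2 * c"
    using spec[OF assms(2)[unfolded C6_def], of a] by (elim exE conjE) blast
  then show "\<exists>b c. c \<in> B \<and> a = b^2 * c" using assms(1) by blast
qed

context
  assumes cancel: "\<forall>a b c :: 'a::comm_monoid_mult. a * c = b * c \<longrightarrow> a = b"
begin

lemma Gpr_dvd: "(x::'a) \<in> Gpr \<Longrightarrow> y dvd x \<Longrightarrow> y \<in> Gpr"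
  using Gpr_div[OF cancel] by (auto simp: dvd_def ac_simps)

lemma Gpr_pow: "(e::'a) \<in> Gpr \<Longrightarrow> e dvd d^n \<Longrightarrow> n \<ge> 1 \<Longrightarrow> e dvd d"
  unfolding Gpr_def by blast

lemma C5_C4: "C5 (Gpr::'a set) \<Longrightarrow> C4 (Gpr::'a set)"
  unfolding C4_def
proof clarify
  fix a :: 'a assume h: "C5 (Gpr::'a set)"
  obtain b c n where bc: "c \<in> Gpr" "a = b * c" "n \<ge> (1::nat)" "a dvd c^n"
    using spec[OF h[unfolded C5_def], of a] by (elim exE conjE) blast
  obtain b1 c1 m where bc1: "c1 \<in> Gpr" "b = b1 * c1" "m \<ge> (1::nat)" "b dvd c1^m"
    using spec[OF h[unfolded C5_def], of b] by (elim exE conjE) blast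
  have "c1 dvd b" using bc1(2) by simp
  also have "b dvd a" using bc(2) by simp
  also have "a dvd c^n" by (rule bc(4))
  finally have "c1 dvd c" using Gpr_pow[OF bc1(1) _ bc(3)] by blast
  then obtain c' where c': "c = c1 * c'" by (auto simp: dvd_def)
  have c'G: "c' \<in> Gpr" using Gpr_div[OF cancel, of c1 c'] bc(1) c' by simp
  have E: "a = (b * c1) * c'" using bc(2) c' by (simp add: ac_simps)
  have D1: "c1^2 dvd b * c1" using \<open>c1 dvd b\<close> by (simp add: power2_eq_square mult_dvd_mono)
  have D2: "b * c1 dvd c1^(m+1)" using mult_dvd_mono[OF bc1(4) dvd_refl[of c1]] by (simp add: mult.commute)
  have R: "relprime (b * c1) c'" unfolding relprime_def
  proof clarify
    fix e assume e1: "e dvd b * c1" and e2: "e dvd c'"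
    have eG: "e \<in> Gpr" using Gpr_dvd[OF c'G e2] .
    have "e dvd c1" using Gpr_pow[OF eG dvd_trans[OF e1 D2]] by simp
    then have "e^2 dvd c" using e2 c' by (simp add: power2_eq_square mult_dvd_mono)
    then show "munit e" using Gpr_Sqf[OF cancel bc(1)] sqf_unit by blast
  qed
  show "\<exists>b c. c \<in> Gpr \<and> relprime b c \<and> a = b * c \<and> (\<exists>d\<in>Gpr. d^2 dvd b \<and> (\<exists>n::nat. n \<ge> 1 \<and> b dvd d^n))"
  proof (rule exI[of _ "b*c1"], rule exI[of _ c'], intro conjI)
    show "\<exists>d\<in>Gpr. d^2 dvd b * c1 \<and> (\<exists>n::nat. n \<ge> 1 \<and> b * c1 dvd d^n)"
    proof (rule bexI[of _ c1])
      show "c1^2 dvd b * c1 \<and> (\<exists>n::nat. n \<ge> 1 \<and> b * c1 dvd c1^n)"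
        using D1 D2 by (intro conjI exI[of _ "m+1"]) simp_all
    qed (rule bc1(1))
  qed (rule c'G, rule R, rule E)
qed

lemma C4_C4': "C4 (Gpr::'a set) \<Longrightarrow> C4' (Gpr::'a set)"
  unfolding C4_def C4'_def
proof clarify
  fix a :: 'a assume h: "\<forall>a::'a. \<exists>b c. c \<in> Gpr \<and> relprime b c \<and> a = b * c \<and>
      (\<exists>d\<in>Gpr. d^2 dvd b \<and> (\<exists>n::nat. n \<ge> 1 \<and> b dvd d^n))"
  obtain b c d and n :: nat where bc: "c \<in> Gpr" "relprime b c" "a = b * c" "d \<in> Gpr" "d^2 dvd b" "n \<ge> 1" "b dvd d^n"
    using spec[OF h, of a] by (elim exE conjE bexE) blast
  have "\<forall>e\<in>Gpr. e dvd b \<longrightarrow> e^2 dvd b"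
  proof clarify
    fix e :: 'a assume "e \<in> Gpr" "e dvd b"
    then have "e dvd d" using Gpr_pow[OF \<open>e \<in> Gpr\<close> dvd_trans[OF \<open>e dvd b\<close> bc(7)] bc(6)] by simp
    then have "e^2 dvd d^2" by (simp add: power2_eq_square mult_dvd_mono)
    then show "e^2 dvd b" using bc(5) by (rule dvd_trans)
  qed
  then show "\<exists>b c. c \<in> Gpr \<and> relprime b c \<and> a = b * c \<and> (\<forall>d\<in>Gpr. d dvd b \<longrightarrow> d^2 dvd b)"
    using bc by blast
qed

lemma C5_C5': "C5 (Gpr::'a set) \<Longrightarrow> C5' (Gpr::'a set)"
  unfolding C5_def C5'_def
proof clarify
  fix a :: 'a assume h: "\<forall>a::'a. \<exists>b c. c \<in> Gpr \<and> a = b * c \<and> (\<exists>n::nat. n \<ge> 1 \<and> a dvd c^n)"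
  obtain b c and n :: nat where bc: "c \<in> Gpr" "a = b * c" "n \<ge> 1" "a dvd c^n"
    using spec[OF h, of a] by (elim exE conjE) blast
  have "\<forall>d\<in>Gpr. d dvd a \<longrightarrow> d dvd c"
  proof clarify
    fix d assume "d \<in> Gpr" "d dvd a"
    then show "d dvd c" using Gpr_pow[OF \<open>d \<in> Gpr\<close> dvd_trans[OF \<open>d dvd a\<close> bc(4)] bc(3)] by simp
  qed
  then show "\<exists>b c. c \<in> Gpr \<and> a = b * c \<and> (\<forall>d\<in>Gpr. d dvd a \<longrightarrow> d dvd c)" using bc by blast
qed

end

theorem proposition4p1:
  assumes cancel: "\<And>a b c :: 'a::comm_monoid_mult. a * c = b * c \<Longrightarrow> a = b"
  shows
   \<comment> \<open>(a)\<close>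
   "(C1 (Sqf::'a set) \<longrightarrow> C0 (Sqf::'a set)) \<and>
    (C3 (Sqf::'a set) \<longrightarrow> C0 (Sqf::'a set)) \<and>
    (C2 (Sqf::'a set) \<longrightarrow> C1 (Sqf::'a set)) \<and>
    (C2 (Sqf::'a set) \<longrightarrow> C3 (Sqf::'a set)) \<and>
    (C2 (Sqf::'a set) \<longrightarrow> C5 (Sqf::'a set)) \<and>
    (C3 (Sqf::'a set) \<longrightarrow> C6 (Sqf::'a set)) \<and>
    (C1 (Gpr::'a set) \<longrightarrow> C0 (Gpr::'a set)) \<and>
    (C3 (Gpr::'a set) \<longrightarrow> C0 (Gpr::'a set)) \<and>
    (C2 (Gpr::'a set) \<longrightarrow> C1 (Gpr::'a set)) \<and>
    (C2 (Gpr::'a set) \<longrightarrow> C3 (Gpr::'a set)) \<and>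
    (C2 (Gpr::'a set) \<longrightarrow> C5 (Gpr::'a set)) \<and>
    (C3 (Gpr::'a set) \<longrightarrow> C6 (Gpr::'a set)) \<and>
    (C5 (Gpr::'a set) \<longrightarrow> C4 (Gpr::'a set)) \<and>
    (C4 (Gpr::'a set) \<longrightarrow> C4' (Gpr::'a set)) \<and>
    (C5 (Gpr::'a set) \<longrightarrow> C5' (Gpr::'a set)) \<and>
    (C0 (Gpr::'a set) \<longrightarrow> C0 (Sqf::'a set)) \<and>
    (C1 (Gpr::'a set) \<longrightarrow> C1 (Sqf::'a set)) \<and>
    (C2 (Gpr::'a set) \<longrightarrow> C2 (Sqf::'a set)) \<and>
    (C3 (Gpr::'a set) \<longrightarrow> C3 (Sqf::'a set)) \<and>
    (C4 (Gpr::'a set) \<longrightarrow> C4 (Sqf::'a set)) \<and>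
    (C5 (Gpr::'a set) \<longrightarrow> C5 (Sqf::'a set)) \<and>
    (C6 (Gpr::'a set) \<longrightarrow> C6 (Sqf::'a set))"
proof -
  have cancel: "\<forall>a b c :: 'a. a * c = b * c \<longrightarrow> a = b" using cancel by blast
  interpret Q: goodS "Sqf :: 'a set" by (rule goodS_Sqf)
  interpret G: goodS "Gpr :: 'a set" by (rule goodS_Gpr[OF cancel])
  have sub: "(Gpr :: 'a set) \<subseteq> Sqf" using Gpr_Sqf[OF cancel] by blast
  show ?thesis
    using Q.C1_C0 Q.C3_C0 Q.C2_C1 Q.C2_C3 Q.C2_C5 Q.C3_C6
      G.C1_C0 G.C3_C0 G.C2_C1 G.C2_C3 G.C2_C5 G.C3_C6
      C5_C4[OF cancel] C4_C4'[OF cancel] C5_C5'[OF cancel] m0[OF sub] m1[OF sub] m2[OF sub] m3[OF sub] m4[OF sub] m5[OF sub] m6[OF sub]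
    by (intro conjI impI; simp)
qed


end
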